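(* Let $G$ be a finite simple graph, let $V_1\subset V(G)$ and $V_2 = V(G)\setminus V_1$ with both $V_1,V_2$ nonempty, and let $G_1=G(V_1)$. Write $V=V(G)$. Assume that $\max_{x,y\in V}\delta(x,y)\le 2$ (the contracted diameter of $V$ is at most $2$). Let $[S,\bar S]$ be an edge cut of $G$ with $V_2\subset S$, and let $k = \min_{x\in V_1}\deg_G(x)$. Assume $k > |[S,\bar S]|$. Then: 1. there exists $\bar s\in\bar S$ with $\delta(\bar s,S)=2$; 2. for every $s\in S$, $\delta(s,\bar S)=1$; 3. $|S\cap V_1| < |[S,\bar S]| < k < |\bar S|$; 4. $S\cap V_1\subset \partial^2 V_1$ and $\bar S\supset i^2 V_1$; 5. $\Phi\le |[S,\bar S]|$.
   Context: For $A,B\subset V(G)$, $[A,B]$ denotes the set of edges $ab$ of $G$ with $a\in A$, $b\in B$ (edges are unoriented, so $[A,B]=[B,A]$); $[v,A]$ means $[\{v\},A]$. $\deg_G(v)=|[v,V(G)]|$. For $A\subset V(G)$, $G(A)$ is the induced subgraph on $A$. $d_G(v,w)$ is the graph distance in $G$ and $d_G(v,A)=\min_{w\in A}d_G(v,w)$. An edge cut is a set $[S,\bar S]$ where $\emptyset\ne S\subsetneq V(G)$ and $\bar S=V(G)\setminus S$. Contracted distance: for $x,y\in V_1$, $\delta(x,y)=\min\{d_{G_1}(x,y),\, d_G(x,V_2)+d_G(y,V_2)\}$; for $x\in V$ and $y\in V_2$, $\delta(x,y)=\delta(y,x)=d_G(x,V_2)$. For $x\in V$ and $A\subset V$, $\delta(x,A)=\min_{a\in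 A}\delta(x,a)$. For $j\ge 1$: $\partial^j V_1=\{x\in V_1: |[x,V_2]|\ge j\}$ and $i^j V_1=\{x\in V_1: |[x,V_2]|<j\}$. $\Phi=\sum_{x\in V_1}\min\{\max\{1,|[x,i^2V_1]|\},\,|[x,V_2]|\}$. *)

theory Defs
  imports Main "HOL-Library.Extended_Nat"
begin

definition simple_graph :: "'a set \<Rightarrow> ('a \<Rightarrow> 'a \<Rightarrow> bool) \<Rightarrow> bool" where
  "simple_graph V E \<longleftrightarrow> finite V \<and> (\<forall>x y. E x y \<longrightarrow> E y x) \<and> (\<forall>x. \<not> E x x)
     \<and> (\<forall>x y. E x y \<longrightarrow> x \<in> V \<and> y \<in> V)"

definition edges_between :: "('a \<Rightarrow> 'a \<Rightarrow> bool) \<Rightarrow> 'a set \<Rightarrow> 'a set \<Rightarrow> 'a set set" where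
  "edges_between E A B = {{a, b} | a b. a \<in> A \<and> b \<in> B \<and> E a b}"

definition degree :: "'a set \<Rightarrow> ('a \<Rightarrow> 'a \<Rightarrow> bool) \<Rightarrow> 'a \<Rightarrow> nat" where
  "degree V E v = card (edges_between E {v} V)"

text \<open>Graph distance in the induced subgraph on A (infinite if no path).\<close>
definition gdist :: "('a \<Rightarrow> 'a \<Rightarrow> bool) \<Rightarrow> 'a set \<Rightarrow> 'a \<Rightarrow> 'a \<Rightarrow> enat" where
  "gdist E A x y = (INF n \<in> {n. \<exists>xs. length xs = Suc n \<and> hd xs = x \<and> last xs = y
        \<and> set xs \<subseteq> A \<and> (\<forall>i<n. E (xs ! i) (xs ! Suc i))}. enat n)"

definition gdist_set :: "('a \<Rightarrow> 'a \<Rightarrow> bool) \<Rightarrow> 'a set \<Rightarrow> 'a \<Rightarrow> 'a set \<Rightarrow> enat" where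
  "gdist_set E V x A = (INF a \<in> A. gdist E V x a)"

definition cdist :: "('a \<Rightarrow> 'a \<Rightarrow> bool) \<Rightarrow> 'a set \<Rightarrow> 'a set \<Rightarrow> 'a \<Rightarrow> 'a \<Rightarrow> enat" where
  "cdist E V V1 x y =
     (if x \<in> V1 \<and> y \<in> V1 then
        min (gdist E V1 x y) (gdist_set E V x (V - V1) + gdist_set E V y (V - V1))
      else if y \<notin> V1 then gdist_set E V x (V - V1)
      else gdist_set E V y (V - V1))"

definition cdist_set :: "('a \<Rightarrow> 'a \<Rightarrow> bool) \<Rightarrow> 'a set \<Rightarrow> 'a set \<Rightarrow> 'a \<Rightarrow> 'a set \<Rightarrow> enat" where
  "cdist_set E V V1 x A = (INF a \<in> A. cdist E V V1 x a)"

definition bdry :: "('a \<Rightarrow> 'a \<Rightarrow> bool) \<Rightarrow> 'a set \<Rightarrow> 'a set \<Rightarrow> nat \<Rightarrow> 'a set" where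
  "bdry E V V1 j = {x \<in> V1. card (edges_between E {x} (V - V1)) \<ge> j}"

definition intr :: "('a \<Rightarrow> 'a \<Rightarrow> bool) \<Rightarrow> 'a set \<Rightarrow> 'a set \<Rightarrow> nat \<Rightarrow> 'a set" where
  "intr E V V1 j = {x \<in> V1. card (edges_between E {x} (V - V1)) < j}"

definition Phi :: "('a \<Rightarrow> 'a \<Rightarrow> bool) \<Rightarrow> 'a set \<Rightarrow> 'a set \<Rightarrow> nat" where
  "Phi E V V1 = (\<Sum>x\<in>V1. min (max 1 (card (edges_between E {x} (intr E V V1 2))))
                              (card (edges_between E {x} (V - V1))))"

end

theory Submission
  imports Defs
begin


lemma gdist_path:
  assumes "gdist E A x y \<le> enat n"
  shows "\<exists>m xs. m \<le> n \<and> length xs = Suc m \<and> hd xs = x \<and> last xs = y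
        \<and> set xs \<subseteq> A \<and> (\<forall>i<m. E (xs ! i) (xs ! Suc i))"
proof -
  let ?N = "{n. \<exists>xs. length xs = Suc n \<and> hd xs = x \<and> last xs = y
        \<and> set xs \<subseteq> A \<and> (\<forall>i<n. E (xs ! i) (xs ! Suc i))}"
  have ne: "?N \<noteq> {}"
  proof
    assume e: "?N = {}"
    have "gdist E A x y = \<infinity>" unfolding gdist_def by (subst e) (simp add: top_enat_def)
    with assms show False by simp
  qed
  then obtain m0 where m0: "m0 \<in> ?N" by blast
  define m where "m = (LEAST m. m \<in> ?N)"
  have mN: "m \<in> ?N" unfolding m_def using m0 by (rule LeastI)
  have "gdist E A x y = enat m"
  proof -
    have "gdist E A x y \<le> enat m" unfolding gdist_def using mN by (rule INF_lower)
    moreover have "enat m \<le> gdist E A x y" unfolding gdist_def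
      by (rule INF_greatest) (simp add: m_def Least_le)
    ultimately show ?thesis by simp
  qed
  with assms mN show ?thesis by auto
qed

lemma gdist_le1: assumes "gdist E A x y \<le> 1" shows "x = y \<or> E x y"
proof -
  from gdist_path[of E A x y 1] assms obtain m xs where
    h: "m \<le> 1" "length xs = Suc m" "hd xs = x" "last xs = y" "\<forall>i<m. E (xs ! i) (xs ! Suc i)"
    by (auto simp: one_enat_def)
  show ?thesis
  proof (cases m)
    case 0 then obtain a where "xs = [a]" using h by (cases xs) auto
    then show ?thesis using h by auto
  next
    case (Suc m') then have "m = 1" using h by simp
    then obtain a b where "xs = [a,b]" using h(2) by (cases xs; cases "tl xs") auto
    then show ?thesis using h \<open>m=1\<close> by auto
  qed
qed

lemma gdist_le2: assumes "gdist E A x y \<le> 2" shows "x = y \<or> E x y \<or> (\<exists>u\<in>A. E x u \<and> E u y)"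
proof -
  from gdist_path[of E A x y 2] assms obtain m xs where
    h: "m \<le> 2" "length xs = Suc m" "hd xs = x" "last xs = y" "set xs \<subseteq> A" "\<forall>i<m. E (xs ! i) (xs ! Suc i)"
    by (auto simp: numeral_eq_enat)
  have "m = 0 \<or> m = 1 \<or> m = 2" using h(1) by auto
  then show ?thesis
  proof (elim disjE)
    assume "m = 0" then obtain a where "xs = [a]" using h by (cases xs) auto
    then show ?thesis using h by auto
  next
    assume "m = 1"
    then obtain a b where "xs = [a,b]" using h(2) by (cases xs; cases "tl xs") auto
    then show ?thesis using h \<open>m=1\<close> by auto
  next
    assume "m = 2"
    then obtain a b c where "xs = [a,b,c]" using h(2)
      by (cases xs; cases "tl xs"; cases "tl (tl xs)") auto
    then show ?thesis using h \<open>m=2\<close> by (auto simp: less_Suc_eq numeral_2_eq_2)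
  qed
qed

lemma gdist_edge: assumes "x \<in> A" "y \<in> A" "E x y" shows "gdist E A x y \<le> 1"
proof -
  have "gdist E A x y \<le> enat 1" unfolding gdist_def
    by (rule INF_lower) (rule CollectI, rule exI[of _ "[x,y]"], use assms in auto)
  then show ?thesis by (simp add: one_enat_def)
qed

lemma gdist_le0: assumes "gdist E A x y \<le> 0" shows "x = y"
proof -
  from gdist_path[of E A x y 0] assms obtain m xs where
    h: "m \<le> 0" "length xs = Suc m" "hd xs = x" "last xs = y"
    by (auto simp: zero_enat_def)
  then obtain a where "xs = [a]" by (cases xs) auto
  then show ?thesis using h by auto
qed

lemma gdist_ge1: assumes "x \<noteq> y" shows "1 \<le> gdist E A x y"
proof (rule ccontr)
  assume "\<not> 1 \<le> gdist E A x y"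
  then have "gdist E A x y \<le> 0" by (cases "gdist E A x y") (auto simp: one_enat_def zero_enat_def)
  then show False using gdist_le0 assms by metis
qed

lemma gdist_ge2: assumes "x \<noteq> y" "\<not> E x y" shows "2 \<le> gdist E A x y"
proof (rule ccontr)
  assume "\<not> 2 \<le> gdist E A x y"
  then have "gdist E A x y \<le> 1" by (cases "gdist E A x y") (auto simp: one_enat_def numeral_eq_enat)
  then show False using gdist_le1 assms by metis
qed

lemma gs_ge: "(\<And>a. a \<in> A \<Longrightarrow> c \<le> gdist E V x a) \<Longrightarrow> c \<le> gdist_set E V x A"
  unfolding gdist_set_def by (rule INF_greatest)

lemma gs_le: "a \<in> A \<Longrightarrow> gdist_set E V x A \<le> gdist E V x a"
  unfolding gdist_set_def by (rule INF_lower)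

lemma enat3: "\<not> (g::enat) \<le> 2 \<Longrightarrow> 3 \<le> g"
  by (cases g) (auto simp: numeral_eq_enat)

lemma gs_le2: assumes "gdist_set E V x A \<le> 2" shows "\<exists>a\<in>A. gdist E V x a \<le> 2"
proof (rule ccontr)
  assume "\<not> ?thesis"
  then have "\<And>a. a \<in> A \<Longrightarrow> 3 \<le> gdist E V x a"
    by (metis enat3)
  then have "3 \<le> gdist_set E V x A" by (rule gs_ge)
  with assms have "(3::enat) \<le> 2" by (metis order.trans)
  then show False by simp
qed

lemma cds_ge: "(\<And>a. a \<in> A \<Longrightarrow> c \<le> cdist E V V1 x a) \<Longrightarrow> c \<le> cdist_set E V V1 x A"
  unfolding cdist_set_def by (rule INF_greatest)

lemma cds_le: "a \<in> A \<Longrightarrow> cdist_set E V V1 x A \<le> cdist E V V1 x a"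
  unfolding cdist_set_def by (rule INF_lower)



lemma eb_single_img: "edges_between E {x} B = (\<lambda>b. {x,b}) ` {b\<in>B. E x b}"
  unfolding edges_between_def by auto

lemma eb_single: "card (edges_between E {x} B) = card {b\<in>B. E x b}"
  unfolding eb_single_img by (rule card_image) (auto simp: inj_on_def doubleton_eq_iff)

lemma nb_finite: "simple_graph V E \<Longrightarrow> finite {b\<in>B. E x b}"
  unfolding simple_graph_def by (metis (no_types, lifting) mem_Collect_eq rev_finite_subset subsetI)

lemma eb_sym: "simple_graph V E \<Longrightarrow> edges_between E A B = edges_between E B A"
  unfolding edges_between_def simple_graph_def by (auto simp: insert_commute)

lemma eb_UN: "edges_between E X B = (\<Union>x\<in>X. edges_between E {x} B)"
  unfolding edges_between_def by auto

lemma eb_sum: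
  assumes G: "simple_graph V E" and X: "finite X" "X \<inter> B = {}"
  shows "card (edges_between E X B) = (\<Sum>x\<in>X. card {b\<in>B. E x b})"
proof -
  have "card (edges_between E X B) = card (\<Union>x\<in>X. edges_between E {x} B)"
    by (rule arg_cong[OF eb_UN])
  also have "\<dots> = (\<Sum>x\<in>X. card (edges_between E {x} B))"
  proof (rule card_UN_disjoint[OF X(1)])
    show "\<forall>i\<in>X. finite (edges_between E {i} B)"
      using nb_finite[OF G] by (simp add: eb_single_img)
    show "\<forall>i\<in>X. \<forall>j\<in>X. i \<noteq> j \<longrightarrow> edges_between E {i} B \<inter> edges_between E {j} B = {}"
      using X(2) unfolding edges_between_def by (auto simp: doubleton_eq_iff)
  qed
  finally show ?thesis by (simp add: eb_single)
qed


lemma arith1: assumes "1 \<le> (n::nat)" shows "k \<le> n * max 1 (k + 1 - n)"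
proof (cases "k < n")
  case True then show ?thesis proof - have "n * 1 \<le> n * max 1 (k + 1 - n)" by (rule mult_le_mono2) simp then show ?thesis using True by simp qed
next
  case False
  then obtain b where kb: "k = n + b" by (metis le_add_diff_inverse not_less)
  obtain a where na: "n = a + 1" using assms by (metis add.commute le_add_diff_inverse)
  have "k + 1 - n = b + 1" using kb by simp
  then have "n * max 1 (k + 1 - n) = (a+1)*(b+1)" using na by simp
  also have "... = a*b + a + b + 1" by (simp add: algebra_simps)
  finally show ?thesis using kb na by simp
qed

theorem theorem1:
  fixes V :: "'a set" and E :: "'a \<Rightarrow> 'a \<Rightarrow> bool" and V1 S :: "'a set" and k :: nat
  assumes G: "simple_graph V E"
    and V1: "V1 \<subseteq> V" "V1 \<noteq> {}" "V - V1 \<noteq> {}"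
    and diam: "\<forall>x\<in>V. \<forall>y\<in>V. cdist E V V1 x y \<le> 2"
    and S: "S \<noteq> {}" "S \<subset> V" "V - V1 \<subseteq> S"
    and k: "k = Min (degree V E ` V1)"
    and cut: "k > card (edges_between E S (V - S))"
  shows "(\<exists>s\<in>V - S. cdist_set E V V1 s S = 2)
    \<and> (\<forall>s\<in>S. cdist_set E V V1 s (V - S) = 1)
    \<and> card (S \<inter> V1) < card (edges_between E S (V - S))
    \<and> card (edges_between E S (V - S)) < k
    \<and> k < card (V - S)
    \<and> S \<inter> V1 \<subseteq> bdry E V V1 2 \<and> intr E V V1 2 \<subseteq> V - S
    \<and> Phi E V V1 \<le> card (edges_between E S (V - S))"
proof -
  define T where "T = V - S"
  define V2 where "V2 = V - V1"
  define P where "P = S \<inter> V1"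
  define c where "c = card (edges_between E S T)"
  define f where "f = (\<lambda>x. card {b\<in>T. E x b})"
  have fin: "finite V" and Esym: "\<And>x y. E x y \<Longrightarrow> E y x" and irr: "\<And>x. \<not> E x x"
    and Ein: "\<And>x y. E x y \<Longrightarrow> x \<in> V \<and> y \<in> V"
    using G unfolding simple_graph_def by blast+
  have TV1: "T \<subseteq> V1" using S(3) unfolding T_def by auto
  have TS: "T \<inter> S = {}" unfolding T_def by auto
  have Tne: "T \<noteq> {}" using S(2) unfolding T_def by auto
  have finT: "finite T" and finS: "finite S" and finP: "finite P" and finV2: "finite V2" and finV1: "finite V1"
    using fin S(2) V1(1) unfolding T_def P_def V2_def by (auto intro: finite_subset)
  have V2ne: "V2 \<noteq> {}" and V2S: "V2 \<subseteq> S" using V1 S unfolding V2_def by auto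
  have SPV2: "S = P \<union> V2" "P \<inter> V2 = {}" using S V1 unfolding P_def V2_def by auto
  have V1PT: "V1 = P \<union> T" "P \<inter> T = {}" using S V1 unfolding P_def T_def by auto
  have SV: "S \<subseteq> V" using S by auto
  have kle: "\<And>x. x \<in> V1 \<Longrightarrow> k \<le> card {b\<in>V. E x b}"
    unfolding k degree_def eb_single[symmetric] using finV1 by (intro Min_le) auto
  have cT: "c = (\<Sum>t\<in>T. card {b\<in>S. E t b})"
    unfolding c_def eb_sym[OF G, of S T] using eb_sum[OF G finT TS] .
  have cS: "c = (\<Sum>s\<in>S. f s)"
    unfolding c_def f_def using eb_sum[OF G finS] TS by auto
  have ck: "c < k" using cut unfolding c_def T_def .
  have cPV2: "c = (\<Sum>s\<in>P. f s) + (\<Sum>s\<in>V2. f s)"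
    unfolding cS SPV2(1) by (rule sum.union_disjoint) (use finP finV2 SPV2(2) in auto)

  have "\<exists>t0\<in>T. \<forall>s\<in>S. \<not> E t0 s"
  proof (rule ccontr)
    assume "\<not> ?thesis"
    then have ne: "\<And>t. t\<in>T \<Longrightarrow> {b\<in>S. E t b} \<noteq> {}" by auto
    define m where "m = max 1 (k + 1 - card T)"
    have mle: "m \<le> card {b\<in>S. E t b}" if t: "t \<in> T" for t
    proof -
      have "{b\<in>V. E t b} = {b\<in>S. E t b} \<union> {b\<in>T. E t b}" using SV unfolding T_def by auto
      then have "card {b\<in>V. E t b} \<le> card {b\<in>S. E t b} + card {b\<in>T. E t b}" by (metis card_Un_le)
      moreover have "card {b\<in>T. E t b} \<le> card (T - {t})"
        by (rule card_mono) (use finT irr in auto)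
      moreover have "card T = card (T - {t}) + 1" using t finT
        by (metis card_Suc_Diff1 Suc_eq_plus1)
      moreover have "k \<le> card {b\<in>V. E t b}" using kle t TV1 by auto
      moreover have "1 \<le> card {b\<in>S. E t b}"
      proof -
        have "0 < card {b\<in>S. E t b}" using ne[OF t] nb_finite[OF G, of S t] card_gt_0_iff by blast
        then show ?thesis by simp
      qed
      ultimately show ?thesis unfolding m_def by linarith
    qed
    have "card T * m = (\<Sum>t\<in>T. m)" by simp
    also have "\<dots> \<le> c" unfolding cT by (rule sum_mono) (rule mle)
    finally have "card T * m \<le> c" .
    moreover have "k \<le> card T * m" unfolding m_def
      by (rule arith1) (use Tne finT in \<open>simp add: Suc_leI card_gt_0_iff\<close>)
    ultimately show False using ck by linarith
  qed
  then obtain t0 where t0T: "t0 \<in> T" and noS: "\<And>s. s \<in> S \<Longrightarrow> \<not> E t0 s" by blast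
  have noS': "\<And>s. s \<in> S \<Longrightarrow> \<not> E s t0" using noS Esym by blast
  have t0V1: "t0 \<in> V1" and t0V: "t0 \<in> V" using t0T TV1 V1 by auto
  have nbt0: "\<And>u. E t0 u \<Longrightarrow> u \<in> T" using noS Ein unfolding T_def by blast

  have kT: "k < card T"
  proof -
    have "k \<le> card {b\<in>V. E t0 b}" using kle t0V1 by auto
    also have "\<dots> \<le> card (T - {t0})" by (rule card_mono) (use finT irr nbt0 in auto)
    finally show ?thesis using t0T finT by (metis card_Diff1_less order_le_less_trans)
  qed

  have gs_ge1: "\<And>x. x \<in> V1 \<Longrightarrow> 1 \<le> gdist_set E V x V2"
    by (rule gs_ge) (auto simp: V2_def intro!: gdist_ge1)
  have gst0: "2 \<le> gdist_set E V t0 V2"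
    by (rule gs_ge) (use t0V1 noS V2S in \<open>auto simp: V2_def intro!: gdist_ge2\<close>)

  have nbT: "\<exists>t\<in>T. E s t" if s: "s \<in> P" for s
  proof -
    have sV: "s \<in> V" "s \<in> V1" "s \<in> S" using s V1 unfolding P_def by auto
    have le2: "cdist E V V1 s t0 \<le> 2" using diam sV t0V by auto
    have eq: "cdist E V V1 s t0 = min (gdist E V1 s t0) (gdist_set E V s V2 + gdist_set E V t0 V2)"
      using sV t0V1 unfolding cdist_def V2_def by simp
    have three: "(3::enat) \<le> gdist_set E V s V2 + gdist_set E V t0 V2"
    proof -
      have "(1::enat) + 2 \<le> gdist_set E V s V2 + gdist_set E V t0 V2"
        by (rule add_mono) (use gs_ge1 sV gst0 in auto)
      then show ?thesis by simp
    qed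
    have "gdist E V1 s t0 \<le> 2"
    proof (rule ccontr)
      assume "\<not> ?thesis" then have "3 \<le> gdist E V1 s t0" by (rule enat3)
      with three have "3 \<le> cdist E V V1 s t0" unfolding eq by simp
      with le2 have "(3::enat) \<le> 2" by (metis order.trans)
      then show False by simp
    qed
    then have "s = t0 \<or> E s t0 \<or> (\<exists>u\<in>V1. E s u \<and> E u t0)" by (rule gdist_le2)
    moreover have "s \<noteq> t0" using sV t0T TS by auto
    ultimately obtain u where "E s u" "E u t0" using noS' sV by blast
    then show ?thesis using nbt0 Esym by blast
  qed

  have "\<exists>u\<in>T. \<exists>v\<in>V2. E u v"
  proof -
    obtain v0 where v0: "v0 \<in> V2" using V2ne by blast
    have "cdist E V V1 t0 v0 \<le> 2" using diam t0V v0 unfolding V2_def by auto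
    moreover have "cdist E V V1 t0 v0 = gdist_set E V t0 V2" using v0 t0V1 unfolding cdist_def V2_def by simp
    ultimately obtain v where v: "v \<in> V2" "gdist E V t0 v \<le> 2" using gs_le2 by metis
    from gdist_le2[OF v(2)] have "t0 = v \<or> E t0 v \<or> (\<exists>u\<in>V. E t0 u \<and> E u v)" .
    moreover have "t0 \<noteq> v" using v t0V1 unfolding V2_def by auto
    moreover have "\<not> E t0 v" using noS v V2S by auto
    ultimately obtain u where "E t0 u" "E u v" by blast
    then show ?thesis using nbt0 v by blast
  qed
  then obtain u v where uT: "u \<in> T" and vV2: "v \<in> V2" and Euv: "E u v" by blast

  have fpos: "\<And>s. s \<in> P \<Longrightarrow> 1 \<le> f s"
  proof -
    fix s assume "s \<in> P"
    then obtain t where "t \<in> T" "E s t" using nbT by blast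
    then have "{b\<in>T. E s b} \<noteq> {}" by auto
    then have "0 < f s" unfolding f_def using nb_finite[OF G, of T s] card_gt_0_iff by blast
    then show "1 \<le> f s" by simp
  qed
  have sumV2: "1 \<le> (\<Sum>s\<in>V2. f s)"
  proof -
    have "{b\<in>T. E v b} \<noteq> {}" using uT Euv Esym by auto
    then have "0 < f v" unfolding f_def using nb_finite[OF G, of T v] card_gt_0_iff by blast
    then have "1 \<le> f v" by simp
    also have "\<dots> \<le> (\<Sum>s\<in>V2. f s)" by (rule member_le_sum) (use vV2 finV2 in auto)
    finally show ?thesis .
  qed
  have sumP: "card P \<le> (\<Sum>s\<in>P. f s)"
  proof -
    have "card P = (\<Sum>s\<in>P. 1)" by simp
    also have "\<dots> \<le> (\<Sum>s\<in>P. f s)" by (rule sum_mono) (rule fpos)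
    finally show ?thesis .
  qed
  have c3: "card P < c" using cPV2 sumP sumV2 by linarith

  have bd: "2 \<le> card {b\<in>V2. E s b}" if s: "s \<in> P" for s
  proof (rule ccontr)
    assume "\<not> ?thesis"
    then have le1: "card {b\<in>V2. E s b} \<le> 1" by simp
    have sV1: "s \<in> V1" using s unfolding P_def by auto
    have "{b\<in>V. E s b} = {b\<in>T. E s b} \<union> {b\<in>P. E s b} \<union> {b\<in>V2. E s b}"
      using SPV2 SV unfolding T_def P_def V2_def by auto
    then have "card {b\<in>V. E s b} \<le> card {b\<in>T. E s b} + card {b\<in>P. E s b} + card {b\<in>V2. E s b}"
      by (metis (no_types, lifting) card_Un_le add_le_mono1 order_trans)
    moreover have "card {b\<in>P. E s b} \<le> card (P - {s})" by (rule card_mono) (use finP irr in auto)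
    moreover have "card P = card (P - {s}) + 1" using s finP by (metis card_Suc_Diff1 Suc_eq_plus1)
    moreover have "(\<Sum>x\<in>P. f x) = f s + (\<Sum>x\<in>P - {s}. f x)" using s finP by (simp add: sum.remove)
    moreover have "card (P - {s}) \<le> (\<Sum>x\<in>P - {s}. f x)"
    proof -
      have "card (P - {s}) = (\<Sum>x\<in>P - {s}. 1)" by simp
      also have "\<dots> \<le> (\<Sum>x\<in>P - {s}. f x)" by (rule sum_mono) (use fpos in auto)
      finally show ?thesis .
    qed
    moreover have "k \<le> card {b\<in>V. E s b}" using kle sV1 by auto
    ultimately show False using cPV2 sumV2 le1 ck unfolding f_def by linarith
  qed

  have P_bdry: "S \<inter> V1 \<subseteq> bdry E V V1 2"
    using bd unfolding bdry_def P_def V2_def eb_single by auto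
  have intrT: "intr E V V1 2 \<subseteq> T"
  proof
    fix x assume x: "x \<in> intr E V V1 2"
    then have "x \<in> V1" "card {b\<in>V2. E x b} < 2" unfolding intr_def V2_def eb_single by auto
    then show "x \<in> T" using bd V1 unfolding P_def T_def by force
  qed

  have cl1: "cdist_set E V V1 t0 S = 2"
  proof (rule antisym)
    obtain s0 where s0: "s0 \<in> S" using S by blast
    have "cdist_set E V V1 t0 S \<le> cdist E V V1 t0 s0" using s0 by (rule cds_le)
    also have "\<dots> \<le> 2" using diam t0V s0 SV by auto
    finally show "cdist_set E V V1 t0 S \<le> 2" .
    show "2 \<le> cdist_set E V V1 t0 S"
    proof (rule cds_ge)
      fix s assume s: "s \<in> S"
      have st: "s \<noteq> t0" using s t0T TS by auto
      show "2 \<le> cdist E V V1 t0 s"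
      proof (cases "s \<in> V1")
        case True
        have a: "2 \<le> gdist E V1 t0 s" using st noS s by (intro gdist_ge2) auto
        have "(2::enat) + 0 \<le> gdist_set E V t0 V2 + gdist_set E V s V2"
          by (rule add_mono) (use gst0 in auto)
        then have "2 \<le> gdist_set E V t0 V2 + gdist_set E V s V2" by simp
        then show ?thesis using a True t0V1 unfolding cdist_def V2_def by simp
      next
        case False
        then show ?thesis using gst0 t0V1 unfolding cdist_def V2_def by simp
      qed
    qed
  qed

  have cl2: "cdist_set E V V1 s T = 1" if s: "s \<in> S" for s
  proof (rule antisym)
    show "cdist_set E V V1 s T \<le> 1"
    proof (cases "s \<in> V1")
      case True
      then obtain t where t: "t \<in> T" "E s t" using nbT s unfolding P_def by blast
      have "cdist_set E V V1 s T \<le> cdist E V V1 s t" using t(1) by (rule cds_le)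
      also have "\<dots> \<le> gdist E V1 s t" using True t TV1 unfolding cdist_def by auto
      also have "\<dots> \<le> 1" using True t TV1 by (intro gdist_edge) auto
      finally show ?thesis .
    next
      case False
      have "cdist_set E V V1 s T \<le> cdist E V V1 s u" using uT by (rule cds_le)
      also have "\<dots> = gdist_set E V u V2" using False uT TV1 unfolding cdist_def V2_def by auto
      also have "\<dots> \<le> gdist E V u v" using vV2 by (rule gs_le)
      also have "\<dots> \<le> 1" using Euv Ein by (intro gdist_edge) auto
      finally show ?thesis .
    qed
    show "1 \<le> cdist_set E V V1 s T"
    proof (rule cds_ge)
      fix t assume t: "t \<in> T"
      have tV1: "t \<in> V1" using t TV1 by auto
      have st: "s \<noteq> t" using s t TS by auto
      show "1 \<le> cdist E V V1 s t"
      proof (cases "s \<in> V1")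
        case True
        have a: "1 \<le> gdist E V1 s t" using st by (rule gdist_ge1)
        have "(0::enat) + 1 \<le> gdist_set E V s V2 + gdist_set E V t V2"
          by (rule add_mono) (use gs_ge1 tV1 in auto)
        then have "1 \<le> gdist_set E V s V2 + gdist_set E V t V2" by simp
        then show ?thesis using a True tV1 unfolding cdist_def V2_def by simp
      next
        case False
        then show ?thesis using gs_ge1[OF tV1] tV1 unfolding cdist_def V2_def by simp
      qed
    qed
  qed

  have Phi_le: "Phi E V V1 \<le> c"
  proof -
    define g where "g = (\<lambda>x. min (max 1 (card (edges_between E {x} (intr E V V1 2))))
                              (card (edges_between E {x} (V - V1))))"
    have "Phi E V V1 = (\<Sum>x\<in>V1. g x)" unfolding Phi_def g_def ..
    also have "\<dots> = (\<Sum>x\<in>P. g x) + (\<Sum>x\<in>T. g x)"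
      unfolding V1PT(1) by (rule sum.union_disjoint) (use finP finT V1PT(2) in auto)
    also have "\<dots> \<le> (\<Sum>x\<in>P. f x) + (\<Sum>x\<in>T. card {b\<in>V2. E x b})"
    proof (rule add_mono)
      show "(\<Sum>x\<in>P. g x) \<le> (\<Sum>x\<in>P. f x)"
      proof (rule sum_mono)
        fix x assume x: "x \<in> P"
        have "card {b\<in>intr E V V1 2. E x b} \<le> f x" unfolding f_def
          by (rule card_mono) (use nb_finite[OF G] intrT in auto)
        then have "max 1 (card {b\<in>intr E V V1 2. E x b}) \<le> f x" using fpos[OF x] by simp
        then show "g x \<le> f x" unfolding g_def eb_single by linarith
      qed
      show "(\<Sum>x\<in>T. g x) \<le> (\<Sum>x\<in>T. card {b\<in>V2. E x b})"
        by (rule sum_mono) (simp add: g_def eb_single V2_def)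
    qed
    also have "(\<Sum>x\<in>T. card {b\<in>V2. E x b}) = (\<Sum>x\<in>V2. f x)"
    proof -
      have TV2: "T \<inter> V2 = {}" and V2T: "V2 \<inter> T = {}" using TS V2S by blast+
      have "(\<Sum>x\<in>T. card {b\<in>V2. E x b}) = card (edges_between E T V2)"
        using eb_sum[OF G finT TV2] by simp
      also have "\<dots> = card (edges_between E V2 T)" using eb_sym[OF G, of T V2] by simp
      also have "\<dots> = (\<Sum>x\<in>V2. f x)" unfolding f_def
        using eb_sum[OF G finV2 V2T] by simp
      finally show ?thesis .
    qed
    finally show ?thesis using cPV2 by simp
  qed

  show ?thesis
    unfolding T_def[symmetric] c_def[symmetric]
    using cl1 t0T cl2 c3 ck kT P_bdry intrT Phi_le unfolding P_def by blast
qed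

end
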